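(* Let $a\in\mathbb{Z}_{25}$ satisfy $2a^2-2a+1\equiv 0\pmod{25}$ and let $(\mathbb{Z}_{25},\cdot)$ be the quadratical quasigroup with $x\cdot y=ax+(1-a)y \pmod{25}$. Then $(\mathbb{Z}_{25},\cdot)$ is not isomorphic to any of $Q1\times Q1$, $Q1\times (Q1)^*$, $(Q1)^*\times Q1$, $(Q1)^*\times(Q1)^*$.
   Context: $Q1$ denotes (up to isomorphism) the quadratical quasigroup $(\mathbb{Z}_5,\cdot)$ with $x\cdot y=4x+2y\pmod 5$, and $(Q1)^*$ its dual, isomorphic to $(\mathbb{Z}_5,\circ)$ with $x\circ y=2x+4y\pmod 5$ (the dual of a groupoid $(Q,\cdot)$ is $(Q,* )$ with $x*y=y\cdot x$). Products are direct products with componentwise operation. A quadratical quasigroup is a quasigroup satisfying $xy\cdot x=zx\cdot yz$. *)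

theory Defs
  imports Main "HOL-Number_Theory.Cong"
begin

definition groupoid_iso :: "'a set \<Rightarrow> ('a \<Rightarrow> 'a \<Rightarrow> 'a) \<Rightarrow> 'b set \<Rightarrow> ('b \<Rightarrow> 'b \<Rightarrow> 'b) \<Rightarrow> bool" where
  "groupoid_iso A m B n \<longleftrightarrow>
     (\<exists>f. bij_betw f A B \<and> (\<forall>x\<in>A. \<forall>y\<in>A. f (m x y) = n (f x) (f y)))"

definition Zn :: "int \<Rightarrow> int set" where
  "Zn n = {0..<n}"

definition q1_op :: "int \<Rightarrow> int \<Rightarrow> int" where
  "q1_op x y = (4 * x + 2 * y) mod 5"

definition dual_op :: "('a \<Rightarrow> 'a \<Rightarrow> 'a) \<Rightarrow> 'a \<Rightarrow> 'a \<Rightarrow> 'a" where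
  "dual_op m x y = m y x"

definition prod_op :: "('a \<Rightarrow> 'a \<Rightarrow> 'a) \<Rightarrow> ('b \<Rightarrow> 'b \<Rightarrow> 'b) \<Rightarrow> 'a \<times> 'b \<Rightarrow> 'a \<times> 'b \<Rightarrow> 'a \<times> 'b" where
  "prod_op m n p q = (m (fst p) (fst q), n (snd p) (snd q))"

definition aff25_op :: "int \<Rightarrow> int \<Rightarrow> int \<Rightarrow> int" where
  "aff25_op a x y = (a * x + (1 - a) * y) mod 25"

end

theory Submission
  imports Defs
begin

lemma Z5_cases: "(x::int) \<in> {0..<5} \<Longrightarrow> x = 0 \<or> x = 1 \<or> x = 2 \<or> x = 3 \<or> x = 4"
  by auto

lemma q1_id: "x \<in> {0..<5} \<Longrightarrow> y \<in> {0..<5} \<Longrightarrow>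
  q1_op y (q1_op y (q1_op y (q1_op y x))) = x"
  apply (drule Z5_cases, drule Z5_cases)
  by (elim disjE) (simp_all add: q1_op_def)

lemma q1d_id: "x \<in> {0..<5} \<Longrightarrow> y \<in> {0..<5} \<Longrightarrow>
  dual_op q1_op y (dual_op q1_op y (dual_op q1_op y (dual_op q1_op y x))) = x"
  apply (drule Z5_cases, drule Z5_cases)
  by (elim disjE) (simp_all add: q1_op_def dual_op_def)

lemma gen:
  assumes a: "a = 4 \<or> a = 22"
    and id1: "\<And>x y. x \<in> {0..<5} \<Longrightarrow> y \<in> {0..<5} \<Longrightarrow> m y (m y (m y (m y x))) = x"
    and id2: "\<And>x y. x \<in> {0..<5} \<Longrightarrow> y \<in> {0..<5} \<Longrightarrow> n y (n y (n y (n y x))) = x"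
  shows "\<not> groupoid_iso (Zn 25) (aff25_op a) (Zn 5 \<times> Zn 5) (prod_op m n)"
proof
  assume "groupoid_iso (Zn 25) (aff25_op a) (Zn 5 \<times> Zn 5) (prod_op m n)"
  then obtain f where b: "bij_betw f (Zn 25) (Zn 5 \<times> Zn 5)"
    and h: "\<forall>x\<in>Zn 25. \<forall>y\<in>Zn 25. f (aff25_op a x y) = prod_op m n (f x) (f y)"
    unfolding groupoid_iso_def by blast
  let ?t = "\<lambda>x y. aff25_op a y (aff25_op a y (aff25_op a y (aff25_op a y x)))"
  have cl: "\<And>x y. x \<in> Zn 25 \<Longrightarrow> y \<in> Zn 25 \<Longrightarrow> aff25_op a x y \<in> Zn 25"
    by (simp add: aff25_op_def Zn_def)
  have z0: "(0::int) \<in> Zn 25" and z1: "(1::int) \<in> Zn 25" by (auto simp: Zn_def)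
  have f0: "f 0 \<in> Zn 5 \<times> Zn 5" and f1: "f 1 \<in> Zn 5 \<times> Zn 5"
    using b z0 z1 bij_betwE by blast+
  let ?p = "prod_op m n"
  have "f (?t 0 1) = ?p (f 1) (?p (f 1) (?p (f 1) (?p (f 1) (f 0))))"
    using h z0 z1 cl by simp
  also have "\<dots> = f 0"
    using f0 f1 id1 id2 by (cases "f 0", cases "f 1") (simp add: prod_op_def Zn_def)
  finally have "?t 0 1 = 0"
    using b z0 z1 cl bij_betw_imp_inj_on[OF b] by (meson inj_onD)
  then show False using a by (auto simp: aff25_op_def)
qed

theorem theorem7p2:
  fixes a :: int
  assumes "a \<in> Zn 25"
    and "[2 * a ^ 2 - 2 * a + 1 = 0] (mod 25)"
  shows "\<not> groupoid_iso (Zn 25) (aff25_op a) (Zn 5 \<times> Zn 5) (prod_op q1_op q1_op)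
       \<and> \<not> groupoid_iso (Zn 25) (aff25_op a) (Zn 5 \<times> Zn 5) (prod_op q1_op (dual_op q1_op))
       \<and> \<not> groupoid_iso (Zn 25) (aff25_op a) (Zn 5 \<times> Zn 5) (prod_op (dual_op q1_op) q1_op)
       \<and> \<not> groupoid_iso (Zn 25) (aff25_op a) (Zn 5 \<times> Zn 5) (prod_op (dual_op q1_op) (dual_op q1_op))"
proof -
  have r: "a \<in> {0..<25}" using assms(1) by (simp add: Zn_def)
  have a: "a = 4 \<or> a = 22"
  proof -
    have "a \<in> {0,1,2,3,4,5,6,7,8,9,10,11,12,13,14,15,16,17,18,19,20,21,22,23,24}"
      using r by (simp add: atLeastLessThan_iff) presburger
    then show ?thesis using assms(2) by (auto simp: cong_def)
  qed
  show ?thesis using gen[OF a] q1_id q1d_id by blast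
qed

end
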